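(* Let $M=(E,\mathcal{L})$ be a matroid with finitarization $M^{\mathrm{fin}}$, and define $\hat{M}=(E,\mathcal{K})$ where $S\in\mathcal{K}$ if and only if there exist a base $F$ of $M^{\mathrm{fin}}$ and a base $B$ of $M$ with $B\subseteq F$ and $S\subseteq F\setminus B$. If $M$ is nearly finitary and $\hat{M}$ is a matroid, then $M$ is $k$-nearly finitary for some integer $k$.
   Context: A matroid $(E,\mathcal{L})$: $\emptyset\in\mathcal{L}$; subsets of independent sets are independent; if $B$ is maximal in $\mathcal{L}$ and $A\in\mathcal{L}$ is not maximal, then $A\cup\{b\}\in\mathcal{L}$ for some $b\in B\setminus A$; for $A\in\mathcal{L}$ and $A\subseteq X\subseteq E$ the family $\{S\in\mathcal{L}:A\subseteq S\subseteq X\}$ has a maximal element. Bases are maximal independent sets. The finitarization $M^{\mathrm{fin}}=(E,\mathcal{L}^{\mathrm{fin}})$, where $\mathcal{L}^{\mathrm{fin}}$ is the set of $S\subseteq E$ all of whose finite subsets lie in $\mathcal{L}$, is a matroid. $M$ is nearly finitary if $F\setminus B$ is finite whenever a base $F$ of $M^{\mathrm{fin}}$ contains a base $B$ of $M$; $M$ is $k$-nearly finitary if $|F\setminus B|\le k$ for all such pairs. *)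

theory Defs
  imports Main
begin

definition maximal_in :: "'a set set \<Rightarrow> 'a set \<Rightarrow> bool" where
  "maximal_in \<F> S \<longleftrightarrow> S \<in> \<F> \<and> (\<forall>T\<in>\<F>. S \<subseteq> T \<longrightarrow> T = S)"

definition matroid :: "'a set \<Rightarrow> 'a set set \<Rightarrow> bool" where
  "matroid E L \<longleftrightarrow>
     (\<forall>S\<in>L. S \<subseteq> E) \<and>
     {} \<in> L \<and>
     (\<forall>A B. B \<in> L \<longrightarrow> A \<subseteq> B \<longrightarrow> A \<in> L) \<and>
     (\<forall>A B. maximal_in L B \<longrightarrow> A \<in> L \<longrightarrow> \<not> maximal_in L A \<longrightarrow>
         (\<exists>b\<in>B - A. insert b A \<in> L)) \<and>
     (\<forall>A X. A \<in> L \<longrightarrow> A \<subseteq> X \<longrightarrow> X \<subseteq> E \<longrightarrow>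
         (\<exists>S. maximal_in {S \<in> L. A \<subseteq> S \<and> S \<subseteq> X} S))"

definition is_base :: "'a set set \<Rightarrow> 'a set \<Rightarrow> bool" where
  "is_base L B \<longleftrightarrow> maximal_in L B"

definition finitarization :: "'a set \<Rightarrow> 'a set set \<Rightarrow> 'a set set" where
  "finitarization E L = {S. S \<subseteq> E \<and> (\<forall>T. T \<subseteq> S \<longrightarrow> finite T \<longrightarrow> T \<in> L)}"

definition nearly_finitary :: "'a set \<Rightarrow> 'a set set \<Rightarrow> bool" where
  "nearly_finitary E L \<longleftrightarrow>
     (\<forall>F B. is_base (finitarization E L) F \<longrightarrow> is_base L B \<longrightarrow> B \<subseteq> F \<longrightarrow> finite (F - B))"

definition k_nearly_finitary :: "nat \<Rightarrow> 'a set \<Rightarrow> 'a set set \<Rightarrow> bool" where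
  "k_nearly_finitary k E L \<longleftrightarrow>
     (\<forall>F B. is_base (finitarization E L) F \<longrightarrow> is_base L B \<longrightarrow> B \<subseteq> F \<longrightarrow>
        finite (F - B) \<and> card (F - B) \<le> k)"

definition M_hat :: "'a set \<Rightarrow> 'a set set \<Rightarrow> 'a set set" where
  "M_hat E L = {S. \<exists>F B. is_base (finitarization E L) F \<and> is_base L B \<and> B \<subseteq> F \<and> S \<subseteq> F - B}"

end

theory Submission
  imports Defs
begin

lemma exch_card:
  assumes m: "matroid E L" and B: "maximal_in L B" and fB: "finite B"
  shows "\<And>I. I \<in> L \<Longrightarrow> finite I \<Longrightarrow> card (B - I) = n \<Longrightarrow> card I \<le> card B"
proof (induction n rule: less_induct)
  case (less n I)
  show ?case
  proof (cases "I \<subseteq> B")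
    case True then show ?thesis using fB by (simp add: card_mono)
  next
    case False
    then obtain x where x: "x \<in> I" "x \<notin> B" by blast
    have down: "\<forall>A B. B \<in> L \<longrightarrow> A \<subseteq> B \<longrightarrow> A \<in> L"
      using m unfolding matroid_def by (elim conjE) assumption
    have aug: "\<forall>A B. maximal_in L B \<longrightarrow> A \<in> L \<longrightarrow> \<not> maximal_in L A \<longrightarrow>
         (\<exists>b\<in>B - A. insert b A \<in> L)"
      using m unfolding matroid_def by (elim conjE) assumption
    have "I - {x} \<in> L" using down less.prems(1) by blast
    moreover have "\<not> maximal_in L (I - {x})"
      using less.prems(1) x unfolding maximal_in_def by blast
    ultimately obtain b where b: "b \<in> B - (I - {x})" "insert b (I - {x}) \<in> L"
      using aug B by blast
    have bx: "b \<noteq> x" using b x by auto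
    have bI: "b \<notin> I" using b bx by auto
    define I' where "I' = insert b (I - {x})"
    have fI': "finite I'" using less.prems(2) I'_def by simp
    have cI': "card I' = card I"
    proof -
      have "card I > 0" using x less.prems(2) card_gt_0_iff by blast
      moreover have "card I' = Suc (card (I - {x}))" unfolding I'_def using bI less.prems(2) by simp
      ultimately show ?thesis using x less.prems(2) by simp
    qed
    have "B - I' = (B - I) - {b}" unfolding I'_def using x by auto
    moreover have "b \<in> B - I" using b bI by auto
    ultimately have "card (B - I') < n" using less.prems(3) fB
      by (metis card_Diff1_less finite_Diff)
    from less.IH[OF this _ fI' refl] b(2) cI' show ?thesis unfolding I'_def by simp
  qed
qed

theorem theorem3p4p1:
  fixes E :: "'a set" and L :: "'a set set"
  assumes "matroid E L"
    and "nearly_finitary E L"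
    and "matroid E (M_hat E L)"
  shows "\<exists>k::nat. k_nearly_finitary k E L"
proof -
  let ?K = "M_hat E L"
  have sub: "\<forall>S\<in>?K. S \<subseteq> E"
    using assms(3) unfolding matroid_def by (elim conjE) assumption
  have e: "{} \<in> ?K"
    using assms(3) unfolding matroid_def by (elim conjE) assumption
  have i4: "\<forall>A X. A \<in> ?K \<longrightarrow> A \<subseteq> X \<longrightarrow> X \<subseteq> E \<longrightarrow>
         (\<exists>S. maximal_in {S \<in> ?K. A \<subseteq> S \<and> S \<subseteq> X} S)"
    using assms(3) unfolding matroid_def by (elim conjE) assumption
  obtain B0 where "maximal_in {S \<in> ?K. {} \<subseteq> S \<and> S \<subseteq> E} B0"
    using i4[rule_format, OF e empty_subsetI subset_refl] by blast
  moreover have "{S \<in> ?K. {} \<subseteq> S \<and> S \<subseteq> E} = ?K" using sub by blast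
  ultimately have B0: "maximal_in ?K B0" by simp
  have finK: "\<And>S. S \<in> ?K \<Longrightarrow> finite S"
    using assms(2) unfolding M_hat_def nearly_finitary_def by (auto intro: finite_subset)
  have fB0: "finite B0" using B0 finK unfolding maximal_in_def by blast
  have "k_nearly_finitary (card B0) E L"
    unfolding k_nearly_finitary_def
  proof (intro allI impI)
    fix F B assume h: "is_base (finitarization E L) F" "is_base L B" "B \<subseteq> F"
    have inK: "F - B \<in> ?K" unfolding M_hat_def using h by blast
    have "finite (F - B)" using finK[OF inK] .
    moreover have "card (F - B) \<le> card B0"
      using exch_card[OF assms(3) B0 fB0 inK \<open>finite (F - B)\<close> refl] .
    ultimately show "finite (F - B) \<and> card (F - B) \<le> card B0" by simp
  qed
  then show ?thesis by blast
qed

end
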